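(* Let $d,n\ge 2$, let $f$ be an active update function, let $\mathcal D$ be an interaction distribution on $\Omega$ with full support, and let $\mathcal U^{(0)}$ be any configuration of $n$ opinions in $\mathbb S^{d-1}$. Then $\mathcal U^{(t)}$ polarizes almost surely.
   Context: Model: fix integers $d,n\ge 2$. An opinion is a unit vector in $\mathbb R^d$; a configuration is an $n$-tuple $\mathcal U=(\vec u_1,\dots,\vec u_n)$ of opinions, and $A_{ij}:=\langle \vec u_i,\vec u_j\rangle$. An update function is a function $f:[-1,1]\to\mathbb R$. Let $\Omega=\{(i,j)\in[n]\times[n]: i\ne j\}$, let $\mathcal D$ be a probability distribution on $\Omega$ (full support: every element has positive probability), and let $I^{(1)},I^{(2)},\dots$ be i.i.d. with law $\mathcal D$. Given $\mathcal U^{(0)}$, if the interaction at step $t$ is $(i,j)$ then $\vec u_k^{(t+1)}=\vec u_k^{(t)}$ for $k\ne i$ and $\vec u_i^{(t+1)}=\vec w/\|\vec w\|$ with $\vec w=\vec u_i^{(t)}+f(A_{ij}^{(t)})\,\vec u_j^{(t)}$. A configuration is polarized if for all $i,j$, $\vec u_i=\pm\vec u_j$; $\mathcal U^{(t)}$ polarizes if $\lim_{t\to\infty}\mathcal U^{(t)}$ exists and is polarized. $f$ is active if (1) there exists $A_0\in(-1,1)$ with $f(A)\le 0$ for $A<A_0$ and $f(A)\ge 0$ for $A>A_0$, and (2) there is $m>0$ with $\inf_{-1\le A\le 1}|f(A)|\ge m$. *)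

theory Defs
  imports "HOL-Probability.Probability"
begin

text \<open>Opinions are unit vectors of a Euclidean space 'a (dimension DIM('a) = d);
  a configuration is a map U :: nat => 'a of which only the entries 0..n-1 matter.\<close>

definition active :: "(real \<Rightarrow> real) \<Rightarrow> bool" where
  "active f \<longleftrightarrow>
     (\<exists>A0. -1 < A0 \<and> A0 < 1 \<and>
        (\<forall>A\<in>{-1..1}. A < A0 \<longrightarrow> f A \<le> 0) \<and>
        (\<forall>A\<in>{-1..1}. A > A0 \<longrightarrow> f A \<ge> 0)) \<and>
     (\<exists>m>0. \<forall>A\<in>{-1..1}. m \<le> \<bar>f A\<bar>)"

definition interactions :: "nat \<Rightarrow> (nat \<times> nat) set" where
  "interactions n = {(i, j). i < n \<and> j < n \<and> i \<noteq> j}"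

definition update :: "(real \<Rightarrow> real) \<Rightarrow> (nat \<Rightarrow> 'a::real_inner) \<Rightarrow> nat \<times> nat \<Rightarrow> (nat \<Rightarrow> 'a)" where
  "update f U ij =
     (let i = fst ij; j = snd ij; w = U i + f (inner (U i) (U j)) *\<^sub>R U j
      in U(i := (1 / norm w) *\<^sub>R w))"

primrec traj :: "(real \<Rightarrow> real) \<Rightarrow> (nat \<Rightarrow> 'a::real_inner) \<Rightarrow> (nat \<Rightarrow> nat \<times> nat) \<Rightarrow> nat \<Rightarrow> (nat \<Rightarrow> 'a)" where
  "traj f U0 I 0 = U0"
| "traj f U0 I (Suc t) = update f (traj f U0 I t) (I t)"

definition polarized :: "nat \<Rightarrow> (nat \<Rightarrow> 'a::real_normed_vector) \<Rightarrow> bool" where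
  "polarized n U \<longleftrightarrow> (\<forall>i<n. \<forall>j<n. U i = U j \<or> U i = - U j)"

definition polarizes :: "nat \<Rightarrow> (nat \<Rightarrow> nat \<Rightarrow> 'a::real_normed_vector) \<Rightarrow> bool" where
  "polarizes n X \<longleftrightarrow>
     (\<exists>L. (\<forall>i<n. (\<lambda>t. X t i) \<longlonglongrightarrow> L i) \<and> polarized n L)"

end

theory Submission
  imports Defs
begin

definition stp :: "(real \<Rightarrow> real) \<Rightarrow> 'a::real_inner \<Rightarrow> 'a \<Rightarrow> 'a" where
  "stp f y x = (let w = x + f (inner x y) *\<^sub>R y in (1 / norm w) *\<^sub>R w)"

lemma update_eq: "update f U (i,j) = U(i := stp f (U j) (U i))"
  by (simp add: update_def stp_def Let_def)

definition kap :: "real \<Rightarrow> real" where "kap c = c / sqrt (1 - c\<^sup>2)"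

lemma step_calc:
  fixes x y :: "'a::real_inner"
  assumes x: "norm x = 1" and y: "norm y = 1" and c1: "\<bar>inner x y\<bar> < 1"
  shows "\<bar>inner (stp f y x) y\<bar> < 1 \<and> norm (stp f y x) = 1 \<and>
     kap (inner (stp f y x) y) = kap (inner x y) + f (inner x y) / sqrt (1 - (inner x y)\<^sup>2)"
proof -
  define c where "c = inner x y"
  define g where "g = f c"
  define w where "w = x + g *\<^sub>R y"
  have xx: "inner x x = 1" using x by (simp add: power2_norm_eq_inner[symmetric])
  have yy: "inner y y = 1" using y by (simp add: power2_norm_eq_inner[symmetric])
  have nw2: "(norm w)\<^sup>2 = 1 + 2*g*c + g\<^sup>2"
    unfolding power2_norm_eq_inner w_def c_def
    by (simp add: inner_add_left inner_add_right xx yy inner_commute power2_eq_square algebra_simps)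
  have iw: "inner w y = c + g" unfolding w_def c_def by (simp add: inner_add_left yy)
  have c1': "c\<^sup>2 < 1" using c1 unfolding c_def by (simp add: abs_square_less_1)
  have D: "1 + 2*g*c + g\<^sup>2 = (c+g)\<^sup>2 + (1 - c\<^sup>2)" by (simp add: power2_eq_square algebra_simps)
  have Dpos: "1 + 2*g*c + g\<^sup>2 > 0" using D c1' by (smt (verit) zero_le_power2)
  define N where "N = norm w"
  have "norm w \<noteq> 0" using nw2 Dpos by auto
  hence Npos: "N > 0" unfolding N_def by simp
  have N2: "N\<^sup>2 = (c+g)\<^sup>2 + (1 - c\<^sup>2)" using nw2 D N_def by simp
  have s: "stp f y x = (1/N) *\<^sub>R w" unfolding stp_def w_def N_def g_def c_def by (simp add: Let_def)
  have ns: "norm (stp f y x) = 1" using s Npos N_def by simp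
  have ic: "inner (stp f y x) y = (c+g)/N" using s iw by simp
  have om0: "1 - ((c+g)/N)\<^sup>2 = (N\<^sup>2 - (c+g)\<^sup>2)/N\<^sup>2"
    using Npos by (simp add: power_divide diff_divide_distrib)
  have om: "1 - ((c+g)/N)\<^sup>2 = (1 - c\<^sup>2)/N\<^sup>2" using om0 N2 by simp
  have pos: "(1 - c\<^sup>2)/N\<^sup>2 > 0" using c1' Npos by simp
  have lt: "\<bar>(c+g)/N\<bar> < 1"
  proof -
    have "((c+g)/N)\<^sup>2 < 1" using om pos by linarith
    thus ?thesis by (simp add: abs_square_less_1)
  qed
  have sq: "sqrt (1 - ((c+g)/N)\<^sup>2) = sqrt (1 - c\<^sup>2) / N"
    using om Npos by (simp add: real_sqrt_divide)
  have sc: "sqrt (1 - c\<^sup>2) > 0" using c1' by simp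
  have "kap ((c+g)/N) = (c+g) / sqrt (1 - c\<^sup>2)"
    unfolding kap_def sq using Npos sc by (simp add: field_simps)
  also have "\<dots> = kap c + g / sqrt (1 - c\<^sup>2)" unfolding kap_def by (simp add: add_divide_distrib)
  finally have k: "kap ((c+g)/N) = kap c + g / sqrt (1 - c\<^sup>2)" .
  show ?thesis
  proof (intro conjI)
    show "\<bar>inner (stp f y x) y\<bar> < 1" unfolding ic by (rule lt)
    show "norm (stp f y x) = 1" by (rule ns)
    show "kap (inner (stp f y x) y) = kap (inner x y) + f (inner x y) / sqrt (1 - (inner x y)\<^sup>2)"
      unfolding ic c_def[symmetric] g_def[symmetric] by (rule k)
  qed
qed

lemma inner_one_eq:
  fixes x y :: "'a::real_inner"
  assumes "norm x = 1" "norm y = 1" "inner x y = 1" shows "x = y"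
proof -
  have xx: "inner x x = 1" using assms(1) by (simp add: power2_norm_eq_inner[symmetric])
  have yy: "inner y y = 1" using assms(2) by (simp add: power2_norm_eq_inner[symmetric])
  have "(norm (x - y))\<^sup>2 = 0"
    using assms(3) xx yy by (simp add: power2_norm_eq_inner inner_diff_left inner_diff_right inner_commute)
  thus ?thesis by simp
qed

lemma inner_mone_eq:
  fixes x y :: "'a::real_inner"
  assumes "norm x = 1" "norm y = 1" "inner x y = -1" shows "x = - y"
proof -
  have xx: "inner x x = 1" using assms(1) by (simp add: power2_norm_eq_inner[symmetric])
  have yy: "inner y y = 1" using assms(2) by (simp add: power2_norm_eq_inner[symmetric])
  have "(norm (x + y))\<^sup>2 = 0"
    using assms(3) xx yy by (simp add: power2_norm_eq_inner inner_add_left inner_add_right inner_commute)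
  thus ?thesis by (simp add: add_eq_0_iff)
qed

lemma inner_unit_bound:
  fixes x y :: "'a::real_inner"
  assumes "norm x = 1" "norm y = 1" shows "\<bar>inner x y\<bar> \<le> 1"
  using Cauchy_Schwarz_ineq2[of x y] assms by simp

lemma kap_neg: "kap (-c) = - kap c" by (simp add: kap_def)

lemma kap_less_nonneg: assumes "0 \<le> c" "c < d" "d < 1" shows "kap c < kap d"
proof -
  have "1 - d\<^sup>2 < 1 - c\<^sup>2" using assms by (simp add: power_strict_mono)
  moreover have "0 < 1 - d\<^sup>2" using assms by (simp add: abs_square_less_1)
  ultimately have s: "0 < sqrt (1 - d\<^sup>2)" "sqrt (1 - d\<^sup>2) < sqrt (1 - c\<^sup>2)" by auto
  have "c / sqrt (1 - c\<^sup>2) \<le> c / sqrt (1 - d\<^sup>2)"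
    using s assms(1) by (intro divide_left_mono) auto
  also have "\<dots> < d / sqrt (1 - d\<^sup>2)" using s assms by (simp add: divide_strict_right_mono)
  finally show ?thesis by (simp add: kap_def)
qed

lemma kap_sign: assumes "\<bar>c\<bar> < 1" shows "(kap c > 0 \<longleftrightarrow> c > 0) \<and> (kap c < 0 \<longleftrightarrow> c < 0)"
proof -
  have "0 < 1 - c\<^sup>2" using assms by (simp add: abs_square_less_1)
  hence "sqrt (1 - c\<^sup>2) > 0" by simp
  thus ?thesis by (simp add: kap_def divide_pos_pos zero_less_divide_iff divide_less_0_iff)
qed

lemma kap_less: assumes "\<bar>c\<bar> < 1" "\<bar>d\<bar> < 1" "c < d" shows "kap c < kap d"
proof (cases "0 \<le> c")
  case True thus ?thesis using assms kap_less_nonneg by auto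
next
  case False
  show ?thesis
  proof (cases "d \<le> 0")
    case True
    have "kap (-d) < kap (-c)" using assms True by (intro kap_less_nonneg) auto
    thus ?thesis by (simp add: kap_neg)
  next
    case False
    thus ?thesis using \<open>\<not> 0 \<le> c\<close> kap_sign[OF assms(1)] kap_sign[OF assms(2)] by auto
  qed
qed

lemma kap_le_iff: assumes "\<bar>c\<bar> < 1" "\<bar>d\<bar> < 1" shows "kap c \<le> kap d \<longleftrightarrow> c \<le> d"
  using kap_less[OF assms] kap_less[OF assms(2,1)] by (metis linorder_not_less order_le_less)

lemma kap_abs_bound: assumes "\<bar>c\<bar> < 1" "R \<le> \<bar>kap c\<bar>" "0 \<le> R" shows "R / (1 + R) \<le> \<bar>c\<bar>"
proof -
  have p: "0 < 1 - c\<^sup>2" using assms by (simp add: abs_square_less_1)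
  have "\<bar>kap c\<bar> = \<bar>c\<bar> / sqrt (1 - c\<^sup>2)" using p by (simp add: kap_def abs_div)
  hence "R * sqrt (1 - c\<^sup>2) \<le> \<bar>c\<bar>" using assms(2) p by (simp add: le_divide_eq)
  moreover have "1 - c\<^sup>2 \<le> sqrt (1 - c\<^sup>2)"
  proof -
    have t1: "1 - c\<^sup>2 \<le> 1" by simp
    have "(1 - c\<^sup>2)\<^sup>2 \<le> 1 - c\<^sup>2" using p t1 by (simp add: power2_eq_square mult_le_cancel_left1)
    thus ?thesis by (rule real_le_rsqrt)
  qed
  ultimately have "R * (1 - c\<^sup>2) \<le> \<bar>c\<bar>" using assms(3) by (meson mult_left_mono order_trans)
  moreover have "1 - c\<^sup>2 = (1 - \<bar>c\<bar>) * (1 + \<bar>c\<bar>)" by (simp add: power2_eq_square algebra_simps)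
  moreover have "R * (1 - \<bar>c\<bar>) \<le> R * ((1 - \<bar>c\<bar>) * (1 + \<bar>c\<bar>))"
    using assms by (intro mult_left_mono) (auto simp: mult_le_cancel_left1)
  ultimately have "R * (1 - \<bar>c\<bar>) \<le> \<bar>c\<bar>" by (metis order_trans)
  hence "R \<le> \<bar>c\<bar> * (1 + R)" by (simp add: algebra_simps)
  thus ?thesis using assms(3) by (simp add: divide_le_eq mult.commute)
qed


locale act =
  fixes f :: "real \<Rightarrow> real" and A0 m :: real
  assumes A0: "-1 < A0" "A0 < 1"
    and fneg0: "\<And>A. -1 \<le> A \<Longrightarrow> A \<le> 1 \<Longrightarrow> A < A0 \<Longrightarrow> f A \<le> 0"
    and fpos0: "\<And>A. -1 \<le> A \<Longrightarrow> A \<le> 1 \<Longrightarrow> A > A0 \<Longrightarrow> f A \<ge> 0"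
    and mpos: "m > 0"
    and mb: "\<And>A. -1 \<le> A \<Longrightarrow> A \<le> 1 \<Longrightarrow> m \<le> \<bar>f A\<bar>"

lemma active_act: assumes "active f" shows "\<exists>A0 m. act f A0 m"
proof -
  from assms obtain A0 m where h: "-1 < A0" "A0 < 1" "\<forall>A\<in>{-1..1}. A < A0 \<longrightarrow> f A \<le> 0"
    "\<forall>A\<in>{-1..1}. A > A0 \<longrightarrow> f A \<ge> 0" "m > 0" "\<forall>A\<in>{-1..1}. m \<le> \<bar>f A\<bar>"
    unfolding active_def by blast
  have "act f A0 m" by (unfold_locales) (use h in auto)
  thus ?thesis by blast
qed

context act
begin

lemma fpos: "-1 \<le> A \<Longrightarrow> A \<le> 1 \<Longrightarrow> A > A0 \<Longrightarrow> f A \<ge> m"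
  using fpos0 mb by fastforce
lemma fneg: "-1 \<le> A \<Longrightarrow> A \<le> 1 \<Longrightarrow> A < A0 \<Longrightarrow> f A \<le> -m"
  using fneg0 mb by fastforce
lemma fgt0: "-1 \<le> A \<Longrightarrow> A \<le> 1 \<Longrightarrow> f A > 0 \<Longrightarrow> A \<ge> A0 \<and> f A \<ge> m"
  using fneg0 mb by fastforce
lemma flt0: "-1 \<le> A \<Longrightarrow> A \<le> 1 \<Longrightarrow> f A < 0 \<Longrightarrow> A \<le> A0 \<and> f A \<le> -m"
  using fpos0 mb by fastforce
lemma fnz: "-1 \<le> A \<Longrightarrow> A \<le> 1 \<Longrightarrow> f A \<noteq> 0"
  using mb mpos by fastforce

lemma stp_same: fixes y :: "'a::real_inner" assumes "norm y = 1" shows "stp f y y = y"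
proof -
  have yy: "inner y y = 1" using assms by (simp add: power2_norm_eq_inner[symmetric])
  have f1: "f 1 \<ge> m" using fpos A0 by simp
  have "y + f 1 *\<^sub>R y = (1 + f 1) *\<^sub>R y" by (simp add: algebra_simps)
  moreover have "norm ((1 + f 1) *\<^sub>R y) = 1 + f 1" using assms f1 mpos by simp
  ultimately show ?thesis using f1 mpos unfolding stp_def by (simp add: yy Let_def)
qed

lemma stp_opp: fixes y :: "'a::real_inner" assumes "norm y = 1" shows "stp f y (-y) = -y"
proof -
  have yy: "inner (-y) y = -1" using assms by (simp add: power2_norm_eq_inner[symmetric])
  have f1: "f (-1) \<le> -m" using fneg A0 by simp
  have w: "-y + f (inner (-y) y) *\<^sub>R y = (1 - f (-1)) *\<^sub>R (-y)" unfolding yy by (simp add: algebra_simps)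
  have "norm ((1 - f (-1)) *\<^sub>R (-y)) = 1 - f (-1)" using assms f1 mpos by simp
  thus ?thesis using f1 mpos unfolding stp_def Let_def w by simp
qed

lemma unit_stp: fixes x y :: "'a::real_inner" assumes x: "norm x = 1" and y: "norm y = 1"
  shows "norm (stp f y x) = 1"
proof -
  have b: "\<bar>inner x y\<bar> \<le> 1" by (rule inner_unit_bound[OF x y])
  show ?thesis
  proof (cases "\<bar>inner x y\<bar> < 1")
    case True thus ?thesis using step_calc[OF x y True] by simp
  next
    case False
    hence "inner x y = 1 \<or> inner x y = -1" using b by linarith
    thus ?thesis
    proof
      assume "inner x y = 1" hence "x = y" by (rule inner_one_eq[OF x y])
      thus ?thesis using stp_same[OF y] y by simp
    next
      assume "inner x y = -1" hence "x = -y" by (rule inner_mone_eq[OF x y])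
      thus ?thesis using stp_opp[OF y] y by simp
    qed
  qed
qed

definition Inv :: "'a::real_inner \<Rightarrow> nat \<Rightarrow> 'a \<Rightarrow> bool" where
  "Inv y k z \<longleftrightarrow> norm z = 1 \<and> (inner z y = 1 \<or> inner z y = -1 \<or>
     (\<bar>inner z y\<bar> < 1 \<and> ((f (inner z y) > 0 \<and> kap (inner z y) \<ge> kap A0 + real k * m) \<or>
                          (f (inner z y) < 0 \<and> kap (inner z y) \<le> kap A0 - real k * m))))"

lemma Inv0: fixes x y :: "'a::real_inner" assumes x: "norm x = 1" and y: "norm y = 1"
  shows "Inv y 0 x"
proof -
  define c where "c = inner x y"
  have b: "\<bar>c\<bar> \<le> 1" unfolding c_def by (rule inner_unit_bound[OF x y])
  have a0: "\<bar>A0\<bar> < 1" using A0 by auto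
  { assume c1: "\<bar>c\<bar> < 1"
    have "f c \<noteq> 0" using fnz b by auto
    hence "f c > 0 \<or> f c < 0" by linarith
    hence "(f c > 0 \<and> kap c \<ge> kap A0) \<or> (f c < 0 \<and> kap c \<le> kap A0)"
    proof
      assume "f c > 0" hence "c \<ge> A0" using fgt0 b by auto
      thus ?thesis using kap_le_iff[OF a0 c1] \<open>f c > 0\<close> by auto
    next
      assume "f c < 0" hence "c \<le> A0" using flt0 b by auto
      thus ?thesis using kap_le_iff[OF c1 a0] \<open>f c < 0\<close> by auto
    qed }
  thus ?thesis using b x unfolding Inv_def c_def[symmetric] by auto
qed

lemma Inv_step: fixes y z :: "'a::real_inner" assumes y: "norm y = 1" and I: "Inv y k z"
  shows "Inv y (Suc k) (stp f y z)"
proof -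
  define c where "c = inner z y"
  have z: "norm z = 1" using I Inv_def by blast
  have a0: "\<bar>A0\<bar> < 1" using A0 by auto
  consider (one) "c = 1" | (mone) "c = -1" | (p) "\<bar>c\<bar> < 1" "f c > 0" "kap c \<ge> kap A0 + real k * m"
    | (n) "\<bar>c\<bar> < 1" "f c < 0" "kap c \<le> kap A0 - real k * m"
  proof -
    have "c = 1 \<or> c = -1 \<or> (\<bar>c\<bar> < 1 \<and> ((f c > 0 \<and> kap c \<ge> kap A0 + real k * m) \<or>
        (f c < 0 \<and> kap c \<le> kap A0 - real k * m)))"
      using I unfolding Inv_def c_def by (rule conjunct2)
    thus thesis using that by (elim disjE conjE) auto
  qed
  thus ?thesis
  proof cases
    case one hence "z = y" using inner_one_eq[OF z y] c_def by simp
    moreover have "inner y y = 1" using y by (simp add: power2_norm_eq_inner[symmetric])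
    ultimately show ?thesis using stp_same[OF y] y by (simp add: Inv_def)
  next
    case mone hence "z = -y" using inner_mone_eq[OF z y] c_def by simp
    moreover have "inner y y = 1" using y by (simp add: power2_norm_eq_inner[symmetric])
    ultimately show ?thesis using stp_opp[OF y] y by (simp add: Inv_def)
  next
    case p
    define c' where "c' = inner (stp f y z) y"
    have sc: "\<bar>c'\<bar> < 1" "norm (stp f y z) = 1" "kap c' = kap c + f c / sqrt (1 - c\<^sup>2)"
      using step_calc[OF z y p(1)[unfolded c_def]] unfolding c'_def c_def by auto
    have sq: "0 < sqrt (1 - c\<^sup>2)" "sqrt (1 - c\<^sup>2) \<le> 1" using p(1) by (auto simp: abs_square_less_1)
    have b: "\<bar>c\<bar> \<le> 1" using p(1) by simp
    have fm: "f c \<ge> m" using fgt0 b p(2) by auto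
    have "f c \<le> f c / sqrt (1 - c\<^sup>2)" using sq p(2) by (simp add: le_divide_eq mult_left_le_one_le)
    hence k1: "kap c' \<ge> kap c + m" using sc(3) fm by linarith
    hence "kap c' > kap c" using mpos by linarith
    hence "c' > c" using kap_le_iff[OF sc(1) p(1)] by linarith
    moreover have "c \<ge> A0" using fgt0 b p(2) by auto
    ultimately have "c' > A0" by linarith
    moreover have "-1 \<le> c'" "c' \<le> 1" using sc(1) by auto
    ultimately have "f c' \<ge> m" using fpos by blast
    hence "f c' > 0" using mpos by linarith
    moreover have "kap c' \<ge> kap A0 + real (Suc k) * m" using k1 p(3) by (simp add: algebra_simps)
    ultimately show ?thesis unfolding Inv_def c'_def[symmetric] using sc by auto
  next
    case n
    define c' where "c' = inner (stp f y z) y"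
    have sc: "\<bar>c'\<bar> < 1" "norm (stp f y z) = 1" "kap c' = kap c + f c / sqrt (1 - c\<^sup>2)"
      using step_calc[OF z y n(1)[unfolded c_def]] unfolding c'_def c_def by auto
    have sq: "0 < sqrt (1 - c\<^sup>2)" "sqrt (1 - c\<^sup>2) \<le> 1" using n(1) by (auto simp: abs_square_less_1)
    have b: "\<bar>c\<bar> \<le> 1" using n(1) by simp
    have fm: "f c \<le> -m" using flt0 b n(2) by auto
    have "f c / sqrt (1 - c\<^sup>2) \<le> f c" using sq n(2)
      by (simp add: divide_le_eq mult_le_cancel_left_neg)
    hence k1: "kap c' \<le> kap c - m" using sc(3) fm by linarith
    hence "kap c' < kap c" using mpos by linarith
    hence "c' < c" using kap_le_iff[OF n(1) sc(1)] by linarith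
    moreover have "c \<le> A0" using flt0 b n(2) by auto
    ultimately have "c' < A0" by linarith
    moreover have "-1 \<le> c'" "c' \<le> 1" using sc(1) by auto
    ultimately have "f c' \<le> -m" using fneg by blast
    hence "f c' < 0" using mpos by linarith
    moreover have "kap c' \<le> kap A0 - real (Suc k) * m" using k1 n(3) by (simp add: algebra_simps)
    ultimately show ?thesis unfolding Inv_def c'_def[symmetric] using sc by auto
  qed
qed

end

primrec run :: "(real \<Rightarrow> real) \<Rightarrow> (nat \<Rightarrow> 'a::real_inner) \<Rightarrow> (nat \<times> nat) list \<Rightarrow> (nat \<Rightarrow> 'a)" where
  "run f U [] = U"
| "run f U (p # ps) = run f (update f U p) ps"

lemma run_append: "run f U (a @ b) = run f (run f U a) b"
  by (induction a arbitrary: U) auto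

lemma traj_run:
  assumes "\<forall>l<length W. I (s + l) = W ! l"
  shows "traj f U0 I (s + length W) = run f (traj f U0 I s) W"
  using assms
proof (induction W arbitrary: s)
  case Nil thus ?case by simp
next
  case (Cons w ws)
  have "\<forall>l<length ws. I (Suc s + l) = ws ! l"
  proof (intro allI impI)
    fix l assume "l < length ws"
    hence "Suc l < length (w # ws)" by simp
    hence "I (s + Suc l) = (w # ws) ! Suc l" using Cons.prems by blast
    thus "I (Suc s + l) = ws ! l" by simp
  qed
  hence "traj f U0 I (Suc s + length ws) = run f (traj f U0 I (Suc s)) ws" by (rule Cons.IH)
  moreover have "I s = w" using Cons.prems[rule_format, of 0] by simp
  ultimately show ?case by simp
qed

lemma run_rep: assumes "i \<noteq> 0"
  shows "run f U (replicate K (i,0)) = U(i := (stp f (U 0) ^^ K) (U i))"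
  using assms
proof (induction K arbitrary: U)
  case 0 thus ?case by simp
next
  case (Suc K)
  define U' where "U' = U(i := stp f (U 0) (U i))"
  have "run f U (replicate (Suc K) (i,0)) = run f U' (replicate K (i,0))" by (simp add: update_eq U'_def)
  also have "\<dots> = U'(i := (stp f (U' 0) ^^ K) (U' i))" by (rule Suc.IH[OF Suc.prems])
  also have "\<dots> = U(i := (stp f (U 0) ^^ Suc K) (U i))" using Suc.prems
    by (simp add: U'_def funpow_Suc_right del: funpow.simps)
  finally show ?case .
qed

lemma run_blocks:
  assumes "distinct xs" "0 \<notin> set xs"
  shows "run f U (concat (map (\<lambda>i. replicate K (i,0)) xs)) =
     (\<lambda>k. if k \<in> set xs then (stp f (U 0) ^^ K) (U k) else U k)"
  using assms
proof (induction xs arbitrary: U)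
  case Nil thus ?case by simp
next
  case (Cons x xs)
  define U' where "U' = U(x := (stp f (U 0) ^^ K) (U x))"
  have x0: "x \<noteq> 0" using Cons.prems by auto
  have "run f U (concat (map (\<lambda>i. replicate K (i,0)) (x # xs))) =
      run f U' (concat (map (\<lambda>i. replicate K (i,0)) xs))"
    by (simp add: run_append run_rep[OF x0] U'_def)
  also have "\<dots> = (\<lambda>k. if k \<in> set xs then (stp f (U' 0) ^^ K) (U' k) else U' k)"
    using Cons by auto
  also have "\<dots> = (\<lambda>k. if k \<in> set (x # xs) then (stp f (U 0) ^^ K) (U k) else U k)"
    using Cons.prems x0 by (auto simp: U'_def fun_eq_iff)
  finally show ?case .
qed

definition Wd :: "nat \<Rightarrow> nat \<Rightarrow> (nat \<times> nat) list" where
  "Wd n K = concat (map (\<lambda>i. replicate K (i,0)) [1..<n])"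

lemma run_Wd: "run f U (Wd n K) = (\<lambda>k. if k \<in> {1..<n} then (stp f (U 0) ^^ K) (U k) else U k)"
  unfolding Wd_def by (subst run_blocks) auto

lemma Wd_set: "set (Wd n K) \<subseteq> interactions n"
  unfolding Wd_def interactions_def by auto

context act
begin

lemma Inv_iter: fixes x y :: "'a::real_inner" assumes "norm x = 1" "norm y = 1"
  shows "Inv y K ((stp f y ^^ K) x)"
  by (induction K) (auto intro: Inv0 Inv_step assms)

lemma Inv_bound:
  fixes y z :: "'a::real_inner"
  assumes I: "Inv y K z" and R: "0 \<le> R" and K: "real K * m \<ge> \<bar>kap A0\<bar> + R"
  shows "R / (1 + R) \<le> \<bar>inner z y\<bar>"
proof -
  define c where "c = inner z y"
  have r1: "R / (1 + R) \<le> 1" using R by simp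
  consider (one) "c = 1" | (mone) "c = -1" | (p) "\<bar>c\<bar> < 1" "kap c \<ge> kap A0 + real K * m"
    | (n) "\<bar>c\<bar> < 1" "kap c \<le> kap A0 - real K * m"
  proof -
    have "c = 1 \<or> c = -1 \<or> (\<bar>c\<bar> < 1 \<and> ((f c > 0 \<and> kap c \<ge> kap A0 + real K * m) \<or>
        (f c < 0 \<and> kap c \<le> kap A0 - real K * m)))"
      using I unfolding Inv_def c_def by (rule conjunct2)
    thus thesis using that by (elim disjE conjE) auto
  qed
  thus ?thesis
  proof cases
    case p
    have "R \<le> \<bar>kap c\<bar>" using p K by linarith
    thus ?thesis using kap_abs_bound[OF p(1) _ R] c_def by simp
  next
    case n
    have "R \<le> \<bar>kap c\<bar>" using n K by linarith
    thus ?thesis using kap_abs_bound[OF n(1) _ R] c_def by simp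
  qed (use r1 c_def in auto)
qed

lemma reach:
  assumes d: "0 < \<delta>" "\<delta> < 1"
  shows "\<exists>K. \<forall>U::nat \<Rightarrow> 'a::real_inner. (\<forall>k<n. norm (U k) = 1) \<longrightarrow> 0 < n \<longrightarrow>
           run f U (Wd n K) 0 = U 0 \<and> (\<forall>k<n. \<delta> \<le> \<bar>inner (run f U (Wd n K) k) (U 0)\<bar>)"
proof -
  define R where "R = \<delta> / (1 - \<delta>)"
  have R0: "0 \<le> R" using d by (simp add: R_def)
  have RR: "R / (1 + R) = \<delta>" using d by (simp add: R_def field_simps)
  define K where "K = nat \<lceil>(\<bar>kap A0\<bar> + R) / m\<rceil>"
  have "real K \<ge> (\<bar>kap A0\<bar> + R) / m" unfolding K_def by linarith
  hence Km: "real K * m \<ge> \<bar>kap A0\<bar> + R" using mpos by (simp add: divide_le_eq)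
  show ?thesis
  proof (intro exI allI impI, rule conjI)
    fix U :: "nat \<Rightarrow> 'a" assume u: "\<forall>k<n. norm (U k) = 1" and n0: "0 < n"
    show "run f U (Wd n K) 0 = U 0" by (simp add: run_Wd)
    show "\<forall>k<n. \<delta> \<le> \<bar>inner (run f U (Wd n K) k) (U 0)\<bar>"
    proof (intro allI impI)
      fix k assume k: "k < n"
      have u0: "norm (U 0) = 1" using u n0 by auto
      show "\<delta> \<le> \<bar>inner (run f U (Wd n K) k) (U 0)\<bar>"
      proof (cases "k = 0")
        case True
        have "inner (U 0) (U 0) = 1" using u0 by (simp add: power2_norm_eq_inner[symmetric])
        thus ?thesis using True d by (simp add: run_Wd)
      next
        case False
        have "Inv (U 0) K ((stp f (U 0) ^^ K) (U k))" using Inv_iter u k u0 by blast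
        from Inv_bound[OF this R0 Km] show ?thesis using False k RR by (simp add: run_Wd)
      qed
    qed
  qed
qed

end

lemma norm_diff_unit: fixes v e :: "'a::real_inner"
  assumes "norm v = 1" "norm e = 1" shows "(norm (v - e))\<^sup>2 = 2 - 2 * inner v e"
proof -
  have xx: "inner v v = 1" using assms(1) by (simp add: power2_norm_eq_inner[symmetric])
  have yy: "inner e e = 1" using assms(2) by (simp add: power2_norm_eq_inner[symmetric])
  show ?thesis using xx yy by (simp add: power2_norm_eq_inner inner_diff_left inner_diff_right inner_commute)
qed

context act
begin

lemma stable_step:
  fixes V :: "nat \<Rightarrow> 'a::real_inner" and e :: 'a
  assumes e: "norm e = 1" and sg: "\<forall>k. \<sigma> k = 1 \<or> \<sigma> k = -1" and dA: "4 * \<delta> - 3 > \<bar>A0\<bar>"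
    and V: "\<forall>k<n. norm (V k) = 1" and S: "\<forall>k<n. \<delta> \<le> inner (\<sigma> k *\<^sub>R V k) e"
    and ij: "(i,j) \<in> interactions n"
  shows "\<forall>k<n. \<delta> \<le> inner (\<sigma> k *\<^sub>R update f V (i,j) k) e"
proof (intro allI impI)
  fix k assume k: "k < n"
  have i: "i < n" and j: "j < n" using ij by (auto simp: interactions_def)
  show "\<delta> \<le> inner (\<sigma> k *\<^sub>R update f V (i,j) k) e"
  proof (cases "k = i")
    case False thus ?thesis using S k by (simp add: update_eq)
  next
    case True
    have d0: "\<delta> > 0" using dA by linarith
    define vi where "vi = \<sigma> i *\<^sub>R V i"
    define vj where "vj = \<sigma> j *\<^sub>R V j"
    have si: "\<sigma> i * \<sigma> i = 1" and sj: "\<sigma> j * \<sigma> j = 1" using sg[rule_format, of i] sg[rule_format, of j] by auto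
    have si': "\<bar>\<sigma> i\<bar> = 1" and sj': "\<bar>\<sigma> j\<bar> = 1" using sg[rule_format, of i] sg[rule_format, of j] by auto
    have nvi: "norm vi = 1" and nvj: "norm vj = 1" using V i j si' sj' by (auto simp: vi_def vj_def)
    have a: "\<delta> \<le> inner vi e" unfolding vi_def using S i by blast
    have b: "\<delta> \<le> inner vj e" unfolding vj_def using S j by blast
    have Vi: "V i = \<sigma> i *\<^sub>R vi" unfolding vi_def scaleR_scaleR si by simp
    have Vj: "V j = \<sigma> j *\<^sub>R vj" unfolding vj_def scaleR_scaleR sj by simp
    have n1: "(norm (vi - e))\<^sup>2 \<le> 2 - 2 * \<delta>" using norm_diff_unit[OF nvi e] a by linarith
    have n2: "(norm (vj - e))\<^sup>2 \<le> 2 - 2 * \<delta>" using norm_diff_unit[OF nvj e] b by linarith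
    have "vi - vj = (vi - e) - (vj - e)" by simp
    hence "norm (vi - vj) \<le> norm (vi - e) + norm (vj - e)" using norm_triangle_ineq4[of "vi - e" "vj - e"] by simp
    hence "(norm (vi - vj))\<^sup>2 \<le> (norm (vi - e) + norm (vj - e))\<^sup>2" by (simp add: power_mono)
    also have "\<dots> \<le> 2 * (norm (vi - e))\<^sup>2 + 2 * (norm (vj - e))\<^sup>2"
      using zero_le_power2[of "norm (vi - e) - norm (vj - e)"] unfolding power2_diff power2_sum by linarith
    finally have "(norm (vi - vj))\<^sup>2 \<le> 8 - 8 * \<delta>" using n1 n2 by linarith
    moreover have "(norm (vi - vj))\<^sup>2 = 2 - 2 * inner vi vj" using norm_diff_unit[OF nvi nvj] .
    ultimately have vv: "inner vi vj \<ge> 4 * \<delta> - 3" by linarith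
    define A where "A = inner (V i) (V j)"
    have Aeq: "A = \<sigma> i * \<sigma> j * inner vi vj" unfolding A_def
      by (subst Vi, subst Vj) (simp only: inner_scaleR_left inner_scaleR_right mult.assoc mult.left_commute)
    have Ab: "-1 \<le> A" "A \<le> 1" using inner_unit_bound[of "V i" "V j"] V i j A_def by auto
    define g where "g = \<sigma> i * \<sigma> j * f A"
    have g0: "g \<ge> 0"
    proof -
      have "\<sigma> i * \<sigma> j = 1 \<or> \<sigma> i * \<sigma> j = -1" using sg[rule_format, of i] sg[rule_format, of j] by auto
      thus ?thesis
      proof
        assume h: "\<sigma> i * \<sigma> j = 1"
        hence "A = inner vi vj" using Aeq by simp
        hence "A > A0" using vv dA by linarith
        thus ?thesis using fpos0 Ab h g_def by auto
      next
        assume h: "\<sigma> i * \<sigma> j = -1"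
        hence "A = - inner vi vj" using Aeq by simp
        hence "A < A0" using vv dA by linarith
        hence "f A \<le> 0" using fneg0 Ab by auto
        thus ?thesis using h g_def by auto
      qed
    qed
    define w where "w = V i + f A *\<^sub>R V j"
    have "\<sigma> i *\<^sub>R w = \<sigma> i *\<^sub>R V i + (\<sigma> i * f A) *\<^sub>R V j"
      unfolding w_def by (simp only: scaleR_add_right scaleR_scaleR)
    also have "\<sigma> i *\<^sub>R V i = vi" by (simp only: vi_def)
    also have "(\<sigma> i * f A) *\<^sub>R V j = g *\<^sub>R vj"
      unfolding Vj scaleR_scaleR g_def by (simp only: mult.commute mult.left_commute)
    finally have sw: "\<sigma> i *\<^sub>R w = vi + g *\<^sub>R vj" .
    have "norm (\<sigma> i *\<^sub>R w) = norm w" using si' by simp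
    hence nw: "norm w = norm (vi + g *\<^sub>R vj)" using sw by simp
    have nwle: "norm w \<le> 1 + g" using nw norm_triangle_ineq[of vi "g *\<^sub>R vj"] nvi nvj g0 by simp
    have iwe: "inner (vi + g *\<^sub>R vj) e = inner vi e + g * inner vj e"
      by (simp only: inner_add_left inner_scaleR_left)
    have "g * \<delta> \<le> g * inner vj e" using b g0 by (rule mult_left_mono)
    hence iw: "inner (vi + g *\<^sub>R vj) e \<ge> \<delta> * (1 + g)"
      using a iwe by (simp add: distrib_left mult.commute)
    have "inner (vi + g *\<^sub>R vj) e \<le> norm w"
      using nw e norm_cauchy_schwarz[of "vi + g *\<^sub>R vj" e] by simp
    moreover have "\<delta> * (1 + g) > 0" using d0 g0 by simp
    ultimately have wpos: "norm w > 0" using iw by linarith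
    have upd: "update f V (i,j) i = (1 / norm w) *\<^sub>R w"
      by (simp add: update_eq stp_def w_def A_def Let_def)
    have "\<sigma> i *\<^sub>R update f V (i,j) i = (1 / norm w) *\<^sub>R (\<sigma> i *\<^sub>R w)"
      unfolding upd by (simp only: scaleR_scaleR mult.commute)
    hence "inner (\<sigma> i *\<^sub>R update f V (i,j) i) e = inner (vi + g *\<^sub>R vj) e / norm w"
      unfolding sw by simp
    also have "\<dots> \<ge> \<delta> * (1 + g) / norm w" using iw wpos by (intro divide_right_mono) auto
    finally have "inner (\<sigma> i *\<^sub>R update f V (i,j) i) e \<ge> \<delta> * (1 + g) / norm w" .
    moreover have "\<delta> * norm w \<le> \<delta> * (1 + g)" using nwle d0 by (intro mult_left_mono) auto
    hence "\<delta> * (1 + g) / norm w \<ge> \<delta>" using wpos by (simp add: le_divide_eq)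
    ultimately have "\<delta> \<le> inner (\<sigma> i *\<^sub>R update f V (i,j) i) e" by linarith
    thus ?thesis using True by simp
  qed
qed

lemma traj_unit:
  assumes I: "\<forall>t. I t \<in> interactions n" and U0: "\<forall>i<n. norm (U0 i) = (1::real)"
  shows "\<forall>k<n. norm (traj f U0 I t k) = 1"
proof (induction t)
  case 0 thus ?case using U0 by simp
next
  case (Suc t)
  obtain i j where ij: "I t = (i,j)" by fastforce
  have ij': "i < n" "j < n" using I ij by (auto simp: interactions_def dest: spec[of _ t])
  have "norm (traj f U0 I t i) = 1" "norm (traj f U0 I t j) = 1" using Suc ij' by auto
  hence "norm (stp f (traj f U0 I t j) (traj f U0 I t i)) = 1" by (intro unit_stp)
  thus ?case using Suc ij by (simp add: update_eq)
qed

lemma stable_traj: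
  fixes U0 :: "nat \<Rightarrow> 'a::real_inner" and e :: 'a
  assumes I: "\<forall>t. I t \<in> interactions n" and U0: "\<forall>i<n. norm (U0 i) = 1"
    and e: "norm e = 1" and sg: "\<forall>k. \<sigma> k = 1 \<or> \<sigma> k = -1" and dA: "4 * \<delta> - 3 > \<bar>A0\<bar>"
    and S: "\<forall>k<n. \<delta> \<le> inner (\<sigma> k *\<^sub>R traj f U0 I s k) e"
  shows "\<forall>k<n. \<delta> \<le> inner (\<sigma> k *\<^sub>R traj f U0 I (s + d) k) e"
proof (induction d)
  case 0 thus ?case using S by simp
next
  case (Suc d)
  obtain i j where ij: "I (s + d) = (i,j)" by fastforce
  have "(i,j) \<in> interactions n" using I[rule_format, of "s+d"] ij by simp
  from stable_step[OF e sg dA traj_unit[OF I U0] Suc this] show ?case using ij by simp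
qed

end

definition mtch :: "'b list \<Rightarrow> nat \<Rightarrow> (nat \<Rightarrow> 'b) \<Rightarrow> bool" where
  "mtch W t \<omega> \<longleftrightarrow> (\<forall>l<length W. \<omega> (t + l) = W ! l)"

definition NO :: "'b list \<Rightarrow> nat \<Rightarrow> nat \<Rightarrow> (nat \<Rightarrow> 'b) set" where
  "NO W t N = {\<omega>. \<forall>k<N. \<not> mtch W (t + k * length W) \<omega>}"

lemma mtch_alt: "mtch W t \<omega> \<longleftrightarrow> (\<forall>i\<in>{t..<t+length W}. \<omega> i \<in> {W ! (i - t)})"
  unfolding mtch_def
proof (intro iffI ballI allI impI)
  fix i assume h: "\<forall>l<length W. \<omega> (t+l) = W!l" "i \<in> {t..<t+length W}"
  hence "i - t < length W" "t + (i - t) = i" by auto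
  thus "\<omega> i \<in> {W!(i-t)}" using h(1)[rule_format, of "i-t"] by simp
next
  fix l assume h: "\<forall>i\<in>{t..<t+length W}. \<omega> i \<in> {W!(i-t)}" "l < length W"
  thus "\<omega> (t+l) = W!l" using h(1)[rule_format, of "t+l"] by simp
qed

context sequence_space
begin

lemma space_S: "space M = UNIV \<Longrightarrow> space S = UNIV"
  by (auto simp: space_PiM)

end

lemma occurs:
  fixes D :: "'b pmf" and W :: "'b list"
  assumes W: "set W \<subseteq> set_pmf D"
  shows "AE \<omega> in PiM UNIV (\<lambda>_::nat. measure_pmf D). \<exists>s\<ge>t0. mtch W s \<omega>"
proof (cases "W = []")
  case True thus ?thesis by (auto simp: mtch_def)
next
  case False
  interpret sequence_space "measure_pmf D" by unfold_locales
  define L where "L = length W"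
  have L0: "L > 0" using False L_def by simp
  have spS: "space S = UNIV" by (auto simp: space_PiM)
  have spSS: "space (S \<Otimes>\<^sub>M S) = UNIV" by (simp add: space_pair_measure spS)
  have Bset: "{\<omega>. mtch W t \<omega>} \<in> sets S" for t
  proof -
    have "{\<omega>. mtch W t \<omega>} = (\<Inter>i\<in>{t..<t+L}. (\<lambda>x. x i) -` {W ! (i - t)} \<inter> space S)"
      unfolding mtch_alt L_def spS by auto
    also have "\<dots> \<in> sets S"
    proof (rule sets.finite_INT)
      fix i
      have "(\<lambda>x. x i) \<in> measurable S (measure_pmf D)" by (rule measurable_component_singleton) simp
      thus "(\<lambda>x. x i) -` {W ! (i - t)} \<inter> space S \<in> sets S" by (rule measurable_sets) simp
    qed (use L0 in auto)
    finally show ?thesis .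
  qed
  define q where "q = (\<Prod>l<L. pmf D (W ! l))"
  have Bmeas: "measure S {\<omega>. mtch W t \<omega>} = q" for t
  proof -
    have "{\<omega>. mtch W t \<omega>} = {x\<in>space S. \<forall>i\<in>{t..<t+L}. x i \<in> {W ! (i - t)}}"
      unfolding mtch_alt L_def spS by simp
    hence "emeasure S {\<omega>. mtch W t \<omega>} = (\<Prod>i\<in>{t..<t+L}. emeasure (measure_pmf D) {W ! (i - t)})"
      using emeasure_PiM_Collect[of "{t..<t+L}" "\<lambda>i. {W ! (i - t)}"] by simp
    also have "\<dots> = ennreal (\<Prod>i\<in>{t..<t+L}. pmf D (W ! (i - t)))"
      by (simp add: emeasure_pmf_single prod_ennreal)
    also have "(\<Prod>i\<in>{t..<t+L}. pmf D (W ! (i - t))) = q"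
      unfolding q_def using prod.shift_bounds_nat_ivl[of "\<lambda>i. pmf D (W ! (i - t))" 0 t L]
      by (simp add: atLeast0LessThan add.commute)
    finally show ?thesis by (simp add: measure_def q_def prod_nonneg)
  qed
  have q0: "q > 0" unfolding q_def using W L_def by (auto intro!: prod_pos pmf_positive nth_mem)
  have q1: "q \<le> 1" using Bmeas[of 0] P.prob_le_1[of "{\<omega>. mtch W 0 \<omega>}"] by simp
  have NOset: "NO W t N \<in> sets S" for t N
  proof -
    have "NO W t N = space S - (\<Union>k\<in>{..<N}. {\<omega>. mtch W (t + k * length W) \<omega>})"
      unfolding NO_def spS by auto
    also have "\<dots> \<in> sets S" using Bset by (intro sets.Diff sets.finite_UN) auto
    finally show ?thesis .
  qed
  have NOmeas: "measure S (NO W t N) = (1 - q) ^ N" for t N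
  proof (induction N arbitrary: t)
    case 0 thus ?case by (simp add: NO_def spS P.prob_space[unfolded spS])
  next
    case (Suc N)
    define g where "g = (\<lambda>(\<omega>::nat\<Rightarrow>'b, \<omega>'). comb_seq (t + L) \<omega> \<omega>')"
    have gm: "g \<in> measurable (S \<Otimes>\<^sub>M S) S" unfolding g_def by (rule measurable_comb_seq)
    have pre: "g -` NO W t (Suc N) \<inter> space (S \<Otimes>\<^sub>M S) = (UNIV - {\<omega>. mtch W t \<omega>}) \<times> NO W 0 N"
    proof -
      have m1: "mtch W t (comb_seq (t+L) \<omega> \<omega>') = mtch W t \<omega>" for \<omega> \<omega>'
        unfolding mtch_def L_def by (auto simp: comb_seq_less)
      have m2: "mtch W (t + Suc k * L) (comb_seq (t+L) \<omega> \<omega>') = mtch W (k * L) \<omega>'" for k \<omega> \<omega>'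
      proof -
        have "t + Suc k * L + l = (k * L + l) + (t + L)" for l by simp
        thus ?thesis unfolding mtch_def L_def by (simp only: comb_seq_add)
      qed
      have "NO W t (Suc N) = {\<omega>. \<not> mtch W t \<omega> \<and> (\<forall>k<N. \<not> mtch W (t + Suc k * L) \<omega>)}"
        unfolding NO_def L_def by (auto simp: less_Suc_eq_0_disj)
      thus ?thesis unfolding spSS g_def NO_def L_def[symmetric] using m1 m2 by auto
    qed
    have "measure S (NO W t (Suc N)) = measure (distr (S \<Otimes>\<^sub>M S) S g) (NO W t (Suc N))"
      unfolding g_def by (simp add: PiM_comb_seq)
    also have "\<dots> = measure (S \<Otimes>\<^sub>M S) (g -` NO W t (Suc N) \<inter> space (S \<Otimes>\<^sub>M S))"
      by (rule measure_distr[OF gm NOset])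
    also have "\<dots> = measure (S \<Otimes>\<^sub>M S) ((UNIV - {\<omega>. mtch W t \<omega>}) \<times> NO W 0 N)" by (simp add: pre)
    also have "\<dots> = measure S (UNIV - {\<omega>. mtch W t \<omega>}) * measure S (NO W 0 N)"
    proof -
      have s1: "UNIV - {\<omega>. mtch W t \<omega>} \<in> sets S" using sets.compl_sets[OF Bset[of t]] spS by simp
      have "emeasure (S \<Otimes>\<^sub>M S) ((UNIV - {\<omega>. mtch W t \<omega>}) \<times> NO W 0 N) =
          emeasure S (UNIV - {\<omega>. mtch W t \<omega>}) * emeasure S (NO W 0 N)"
        using s1 NOset by (intro P.emeasure_pair_measure_Times) auto
      thus ?thesis by (simp add: measure_def enn2real_mult)
    qed
    also have "measure S (UNIV - {\<omega>. mtch W t \<omega>}) = 1 - q"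
      using P.prob_compl[OF Bset[of t]] Bmeas spS by simp
    finally show ?case using Suc.IH by simp
  qed
  define N0 where "N0 = (\<Inter>N. NO W t0 N)"
  have N0s: "N0 \<in> sets S" unfolding N0_def using NOset by auto
  have N0le: "measure S N0 \<le> (1 - q) ^ N" for N
  proof -
    have "measure S N0 \<le> measure S (NO W t0 N)"
      using N0s NOset by (intro P.finite_measure_mono) (auto simp: N0_def)
    thus ?thesis using NOmeas by simp
  qed
  have lim: "(\<lambda>N. (1 - q) ^ N) \<longlonglongrightarrow> 0" using q0 q1 by (intro LIMSEQ_power_zero) auto
  have "measure S N0 \<le> 0"
    by (rule tendsto_le[OF sequentially_bot lim tendsto_const]) (use N0le in auto)
  hence "N0 \<in> null_sets S" using N0s by (simp add: P.emeasure_eq_measure null_sets_def measure_nonneg antisym)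
  moreover have "{\<omega>\<in>space S. \<not> (\<exists>s\<ge>t0. mtch W s \<omega>)} \<subseteq> N0"
    unfolding N0_def NO_def by auto
  ultimately show ?thesis by (rule AE_I')
qed


context act
begin

lemma close:
  fixes U0 :: "nat \<Rightarrow> 'a::real_inner"
  assumes n: "n \<ge> 2" and I: "\<forall>t. I t \<in> interactions n" and U0: "\<forall>i<n. norm (U0 i) = 1"
    and occ: "\<forall>K. \<exists>s. mtch (Wd n K) s I" and r: "r > 0"
  shows "\<exists>N e \<sigma>. norm e = 1 \<and> (\<forall>k. \<sigma> k = 1 \<or> \<sigma> k = (-1::real)) \<and>
           (\<forall>t\<ge>N. \<forall>k<n. norm (\<sigma> k *\<^sub>R traj f U0 I t k - e) \<le> r)"
proof -
  define \<delta> where "\<delta> = 1 - min (r\<^sup>2/2) ((1 - \<bar>A0\<bar>)/8)"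
  have a0: "\<bar>A0\<bar> < 1" using A0 by auto
  have mpos': "min (r\<^sup>2/2) ((1 - \<bar>A0\<bar>)/8) > 0" using r a0 by simp
  have d1: "\<delta> < 1" using mpos' \<delta>_def by simp
  have mn1: "min (r\<^sup>2/2) ((1 - \<bar>A0\<bar>)/8) \<le> (1 - \<bar>A0\<bar>)/8" by (rule min.cobounded2)
  have mn2: "min (r\<^sup>2/2) ((1 - \<bar>A0\<bar>)/8) \<le> r\<^sup>2/2" by (rule min.cobounded1)
  have dA: "4 * \<delta> - 3 > \<bar>A0\<bar>"
  proof -
    define M where "M = min (r\<^sup>2/2) ((1 - \<bar>A0\<bar>)/8)"
    have "\<delta> = 1 - M" unfolding \<delta>_def M_def ..
    moreover have "8 * M \<le> 1 - \<bar>A0\<bar>" using mn1 M_def by simp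
    ultimately show ?thesis using a0 by linarith
  qed
  have d0: "0 < \<delta>" using dA by linarith
  have dr: "2 - 2 * \<delta> \<le> r\<^sup>2"
  proof -
    define M where "M = min (r\<^sup>2/2) ((1 - \<bar>A0\<bar>)/8)"
    have "\<delta> = 1 - M" unfolding \<delta>_def M_def ..
    moreover have "2 * M \<le> r\<^sup>2" using mn2 M_def by simp
    ultimately show ?thesis by linarith
  qed
  obtain K where K: "\<forall>U::nat \<Rightarrow> 'a. (\<forall>k<n. norm (U k) = 1) \<longrightarrow> 0 < n \<longrightarrow>
           run f U (Wd n K) 0 = U 0 \<and> (\<forall>k<n. \<delta> \<le> \<bar>inner (run f U (Wd n K) k) (U 0)\<bar>)"
    using reach[OF d0 d1, of n] by blast
  obtain s where s: "mtch (Wd n K) s I" using occ by blast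
  define s' where "s' = s + length (Wd n K)"
  have tr: "traj f U0 I s' = run f (traj f U0 I s) (Wd n K)"
    unfolding s'_def by (rule traj_run) (use s in \<open>simp add: mtch_def\<close>)
  have un: "\<forall>k<n. norm (traj f U0 I s k) = 1" by (rule traj_unit[OF I U0])
  have n0: "0 < n" using n by simp
  define e where "e = traj f U0 I s 0"
  have e1: "norm e = 1" using un n0 e_def by simp
  have KK: "run f (traj f U0 I s) (Wd n K) 0 = traj f U0 I s 0 \<and>
     (\<forall>k<n. \<delta> \<le> \<bar>inner (run f (traj f U0 I s) (Wd n K) k) (traj f U0 I s 0)\<bar>)"
    using mp[OF mp[OF spec[OF K, of "traj f U0 I s"] un] n0] .
  have cl: "\<forall>k<n. \<delta> \<le> \<bar>inner (traj f U0 I s' k) e\<bar>" using KK unfolding tr[symmetric] e_def by blast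
  define \<sigma> :: "nat \<Rightarrow> real" where "\<sigma> k = (if inner (traj f U0 I s' k) e \<ge> 0 then 1 else -1)" for k
  have sg: "\<forall>k. \<sigma> k = 1 \<or> \<sigma> k = -1" by (simp add: \<sigma>_def)
  have S: "\<forall>k<n. \<delta> \<le> inner (\<sigma> k *\<^sub>R traj f U0 I s' k) e"
    using cl by (auto simp: \<sigma>_def)
  have st: "\<forall>k<n. \<delta> \<le> inner (\<sigma> k *\<^sub>R traj f U0 I (s' + d) k) e" for d
    by (rule stable_traj[OF I U0 e1 sg dA S])
  show ?thesis
  proof (intro exI conjI allI impI)
    show "norm e = 1" by (fact e1)
    show "\<sigma> k = 1 \<or> \<sigma> k = -1" for k using sg by blast
    fix t k assume t: "s' \<le> t" and k: "k < n"
    have "\<delta> \<le> inner (\<sigma> k *\<^sub>R traj f U0 I t k) e" using st[of "t - s'"] t k by simp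
    moreover have "norm (\<sigma> k *\<^sub>R traj f U0 I t k) = 1"
      using traj_unit[OF I U0, of t] k sg[rule_format, of k] by auto
    moreover note nd = norm_diff_unit[OF this e1]
    ultimately have "(norm (\<sigma> k *\<^sub>R traj f U0 I t k - e))\<^sup>2 \<le> r\<^sup>2"
      using dr by linarith
    thus "norm (\<sigma> k *\<^sub>R traj f U0 I t k - e) \<le> r" by (rule power2_le_imp_le) (use r in simp)
  qed
qed

lemma det_main:
  fixes U0 :: "nat \<Rightarrow> 'a::euclidean_space"
  assumes n: "n \<ge> 2" and I: "\<forall>t. I t \<in> interactions n" and U0: "\<forall>i<n. norm (U0 i) = 1"
    and occ: "\<forall>K. \<exists>s. mtch (Wd n K) s I"
  shows "polarizes n (traj f U0 I)"
proof -
  let ?X = "traj f U0 I"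
  have C: "\<exists>N e \<sigma>. norm e = 1 \<and> (\<forall>k. \<sigma> k = 1 \<or> \<sigma> k = (-1::real)) \<and>
           (\<forall>t\<ge>N. \<forall>k<n. norm (\<sigma> k *\<^sub>R ?X t k - e) \<le> r)" if "r > 0" for r
    using close[OF n I U0 occ that] .
  have cauchy: "Cauchy (\<lambda>t. ?X t i)" if i: "i < n" for i
  proof (rule metric_CauchyI)
    fix \<epsilon> :: real assume \<epsilon>: "\<epsilon> > 0"
    obtain N e \<sigma> where h: "norm e = 1" "\<forall>k. \<sigma> k = 1 \<or> \<sigma> k = (-1::real)"
      "\<forall>t\<ge>N. \<forall>k<n. norm (\<sigma> k *\<^sub>R ?X t k - e) \<le> \<epsilon>/3"
      using C[of "\<epsilon>/3"] \<epsilon> by auto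
    show "\<exists>M. \<forall>a\<ge>M. \<forall>b\<ge>M. dist (?X a i) (?X b i) < \<epsilon>"
    proof (intro exI allI impI)
      fix a b assume a: "N \<le> a" and b: "N \<le> b"
      have sa: "\<bar>\<sigma> i\<bar> = 1" using h(2)[rule_format, of i] by auto
      have "dist (?X a i) (?X b i) = norm (\<sigma> i *\<^sub>R (?X a i - ?X b i))" using sa by (simp add: dist_norm)
      also have "\<sigma> i *\<^sub>R (?X a i - ?X b i) = (\<sigma> i *\<^sub>R ?X a i - e) - (\<sigma> i *\<^sub>R ?X b i - e)"
        by (simp add: algebra_simps)
      also have "norm \<dots> \<le> norm (\<sigma> i *\<^sub>R ?X a i - e) + norm (\<sigma> i *\<^sub>R ?X b i - e)"
        by (rule norm_triangle_ineq4)
      also have "\<dots> \<le> \<epsilon>/3 + \<epsilon>/3" using h(3) a b i by (meson add_mono)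
      finally show "dist (?X a i) (?X b i) < \<epsilon>" using \<epsilon> by linarith
    qed
  qed
  define L where "L i = lim (\<lambda>t. ?X t i)" for i
  have lim: "(\<lambda>t. ?X t i) \<longlonglongrightarrow> L i" if "i < n" for i
    using cauchy[OF that] unfolding L_def by (simp add: Cauchy_convergent_iff convergent_LIMSEQ_iff)
  have near: "norm (L i - L j) \<le> 2 * r \<or> norm (L i + L j) \<le> 2 * r"
    if i: "i < n" and j: "j < n" and r: "r > 0" for i j r
  proof -
    obtain N e \<sigma> where h: "norm e = 1" "\<forall>k. \<sigma> k = 1 \<or> \<sigma> k = (-1::real)"
      "\<forall>t\<ge>N. \<forall>k<n. norm (\<sigma> k *\<^sub>R ?X t k - e) \<le> r"
      using C[OF r] by auto
    have bd: "norm (\<sigma> k *\<^sub>R L k - e) \<le> r" if k: "k < n" for k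
    proof (rule Lim_bounded)
      show "(\<lambda>t. norm (\<sigma> k *\<^sub>R ?X t k - e)) \<longlonglongrightarrow> norm (\<sigma> k *\<^sub>R L k - e)"
        by (intro tendsto_intros lim k)
      show "\<forall>t\<ge>N. norm (\<sigma> k *\<^sub>R ?X t k - e) \<le> r" using h(3) k by blast
    qed
    have "norm (\<sigma> i *\<^sub>R L i - \<sigma> j *\<^sub>R L j) \<le> norm (\<sigma> i *\<^sub>R L i - e) + norm (\<sigma> j *\<^sub>R L j - e)"
      using norm_triangle_ineq4[of "\<sigma> i *\<^sub>R L i - e" "\<sigma> j *\<^sub>R L j - e"] by simp
    also have "\<dots> \<le> 2 * r" using bd[OF i] bd[OF j] by simp
    finally have hh: "norm (\<sigma> i *\<^sub>R L i - \<sigma> j *\<^sub>R L j) \<le> 2 * r" .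
    consider "\<sigma> i = 1" "\<sigma> j = 1" | "\<sigma> i = 1" "\<sigma> j = -1" | "\<sigma> i = -1" "\<sigma> j = 1" | "\<sigma> i = -1" "\<sigma> j = -1"
      using h(2)[rule_format, of i] h(2)[rule_format, of j] by blast
    thus ?thesis
    proof cases
      case 1 thus ?thesis using hh by simp
    next
      case 2 thus ?thesis using hh by simp
    next
      case 3
      have "\<sigma> i *\<^sub>R L i - \<sigma> j *\<^sub>R L j = - (L i + L j)" using 3 by simp
      hence "norm (L i + L j) = norm (\<sigma> i *\<^sub>R L i - \<sigma> j *\<^sub>R L j)" using norm_minus_cancel[of "L i + L j"] by simp
      thus ?thesis using hh by simp
    next
      case 4
      have "norm (L i - L j) = norm (\<sigma> i *\<^sub>R L i - \<sigma> j *\<^sub>R L j)" using 4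
        by (simp add: norm_minus_commute)
      thus ?thesis using hh by simp
    qed
  qed
  have pol: "L i = L j \<or> L i = - L j" if i: "i < n" and j: "j < n" for i j
  proof (rule ccontr)
    assume "\<not> (L i = L j \<or> L i = - L j)"
    hence a: "norm (L i - L j) > 0" and b: "norm (L i + L j) > 0"
      by (auto simp: add_eq_0_iff)
    define M where "M = min (norm (L i - L j)) (norm (L i + L j))"
    have M1: "M \<le> norm (L i - L j)" and M2: "M \<le> norm (L i + L j)" unfolding M_def by simp_all
    have M0: "M > 0" unfolding M_def using a b by simp
    have "M / 4 > 0" using M0 by simp
    from near[OF i j this] show False using M0 M1 M2 by linarith
  qed
  show ?thesis unfolding polarizes_def polarized_def using lim pol by blast
qed

end

theorem mainTheorem2:
  fixes f :: "real \<Rightarrow> real" and n :: nat and D :: "(nat \<times> nat) pmf"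
    and U0 :: "nat \<Rightarrow> 'a::euclidean_space"
  assumes "DIM('a) \<ge> 2" and "n \<ge> 2"
    and "active f"
    and "set_pmf D = interactions n"
    and "\<forall>i<n. norm (U0 i) = 1"
  shows "AE I in PiM UNIV (\<lambda>_::nat. measure_pmf D). polarizes n (traj f U0 I)"
proof -
  obtain A0 m where act: "act f A0 m" using active_act[OF assms(3)] by blast
  have a1: "AE I in PiM UNIV (\<lambda>_::nat. measure_pmf D). \<forall>t. I t \<in> interactions n"
  proof (subst AE_all_countable, rule allI)
    fix t
    show "AE I in PiM UNIV (\<lambda>_::nat. measure_pmf D). I t \<in> interactions n"
    proof (rule AE_PiM_component)
      show "AE x in measure_pmf D. x \<in> interactions n" using AE_measure_pmf[of D] assms(4) by simp
    qed (auto simp: prob_space_measure_pmf)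
  qed
  have a2: "AE I in PiM UNIV (\<lambda>_::nat. measure_pmf D). \<forall>K. \<exists>s\<ge>0. mtch (Wd n K) s I"
  proof (subst AE_all_countable, rule allI)
    fix K
    show "AE I in PiM UNIV (\<lambda>_::nat. measure_pmf D). \<exists>s\<ge>0. mtch (Wd n K) s I"
      using Wd_set[of n K] assms(4) by (intro occurs) auto
  qed
  from a1 a2 show ?thesis
  proof eventually_elim
    case (elim I)
    thus ?case using act.det_main[OF act assms(2) _ assms(5)] by blast
  qed
qed

end
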